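(* In the $n$-fold replicate economy: (i) if all firms have increasing returns to diversification, then $W$ at the fully connected structure is at least $W$ at the islands structure; (ii) if all firms have decreasing returns to diversification, then $W$ at the islands structure is at least $W$ at the fully connected structure.
   Context: Sectors $0$ (labor) and $1,\dots,L$; base shares $a_{0,\ell}>0$, $\sum a_{0,\ell}=1$; requirements $b_{\ell,\ell'}\ge0$, $b_{\ell,0}>0$, $\sum_{\ell'=0}^Lb_{\ell,\ell'}\le1$. $n$-fold replicate: firms $M=\{1,\dots,nL\}$, $M_\ell=\{(\ell-1)n+1,\dots,\ell n\}$ (firm $(\ell-1)n+c$ in country $c$), household share $a_{0,i}=a_{0,\ell}/n$ for $i\in M_\ell$. For a partition $\mathcal{Q}=\{Q_1,\dots,Q_K\}$ of $\{1,\dots,n\}$, $Q_{\ell,k}=\{(\ell-1)n+c:c\in Q_k\}$ and $a^{\mathcal{Q}}$: for $i\in Q_{\ell,k}$, $a_{i,0}=b_{\ell,0}$, $a_{i,i}=b_{\ell,\ell}$, $a_{i,j}=0$ for $j\in Q_{\ell,k}\setminus\{i\}$, $a_{i,j}=b_{\ell,\ell'}/|Q_k|$ for $j\in Q_{\ell',k}$, $\ell'\notin\{0,\ell\}$, $0$ otherwise. Islands structure: $\mathcal{Q}=\{\{1\},\dots,\{n\}\}$; fully connected: $\mathcal{Q}=\{\{1,\dots,n\}\}$. Welfare $W(A,\lambda)=a_0^T(I-A)^{-1}u$, $A=(a_{i,j})_{i,j\in M}$, $u_i=\log\lambda_i(a_i)+\sum_{j\in M\cup\{0\}}a_{i,j}\log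 a_{i,j}$. Hicks-neutral productivity $\bar\lambda(a_i)=1/\prod_{j\in M}a_{i,j}^{a_{i,j}}$. Firm $i$ (with productivity function $\lambda_i>0$ on $\mathbb{R}^M_+$) has increasing (resp. decreasing) returns to diversification if for all $a_i,a'_i$: $\bar\lambda(a_i)\ge\bar\lambda(a'_i)\Rightarrow \lambda_i(a_i)/\lambda_i(a'_i)\ge\bar\lambda(a_i)/\bar\lambda(a'_i)$ (resp. $\le$). *)

theory Defs
  imports Complex_Main "Jordan_Normal_Form.Gauss_Jordan_Elimination"
begin

(* Firms are numbered 1..n*L as in the paper; labour is index 0.
   Firm i (1 \<le> i \<le> n*L) lies in sector (i-1) div n + 1 and country (i-1) mod n + 1. *)

definition firms :: "nat \<Rightarrow> nat \<Rightarrow> nat set" where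
  "firms n L = {1..n*L}"

definition sector :: "nat \<Rightarrow> nat \<Rightarrow> nat" where
  "sector n i = (i - 1) div n + 1"

definition country :: "nat \<Rightarrow> nat \<Rightarrow> nat" where
  "country n i = (i - 1) mod n + 1"

definition blk :: "nat set set \<Rightarrow> nat \<Rightarrow> nat set" where
  "blk Q c = (THE S. S \<in> Q \<and> c \<in> S)"

definition islands :: "nat \<Rightarrow> nat set set" where
  "islands n = (\<lambda>c. {c}) ` {1..n}"

definition fully_connected :: "nat \<Rightarrow> nat set set" where
  "fully_connected n = {{1..n}}"

definition aQ :: "nat \<Rightarrow> nat \<Rightarrow> (nat \<Rightarrow> nat \<Rightarrow> real) \<Rightarrow> nat set set \<Rightarrow> nat \<Rightarrow> nat \<Rightarrow> real" where
  "aQ n L b Q i j =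
     (if j = 0 then b (sector n i) 0
      else if j \<notin> firms n L then 0
      else if sector n j = sector n i then (if j = i then b (sector n i) (sector n i) else 0)
      else if country n j \<in> blk Q (country n i)
        then b (sector n i) (sector n j) / real (card (blk Q (country n i)))
      else 0)"

definition hh :: "nat \<Rightarrow> (nat \<Rightarrow> real) \<Rightarrow> nat \<Rightarrow> real" where
  "hh n a0 i = a0 (sector n i) / real n"

definition xlogx :: "real \<Rightarrow> real" where
  "xlogx x = (if x = 0 then 0 else x * ln x)"

definition xpowx :: "real \<Rightarrow> real" where
  "xpowx x = (if x = 0 then 1 else x powr x)"

(* elements of R^M_+, represented as functions vanishing outside M *)
definition nonneg_vec :: "nat set \<Rightarrow> (nat \<Rightarrow> real) \<Rightarrow> bool" where
  "nonneg_vec M a \<longleftrightarrow> (\<forall>j\<in>M. 0 \<le> a j) \<and> (\<forall>j. j \<notin> M \<longrightarrow> a j = 0)"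

definition hicks :: "nat set \<Rightarrow> (nat \<Rightarrow> real) \<Rightarrow> real" where
  "hicks M a = 1 / (\<Prod>j\<in>M. xpowx (a j))"

definition incr_returns :: "nat set \<Rightarrow> ((nat \<Rightarrow> real) \<Rightarrow> real) \<Rightarrow> bool" where
  "incr_returns M lam \<longleftrightarrow> (\<forall>a a'. nonneg_vec M a \<longrightarrow> nonneg_vec M a' \<longrightarrow>
      hicks M a \<ge> hicks M a' \<longrightarrow> lam a / lam a' \<ge> hicks M a / hicks M a')"

definition decr_returns :: "nat set \<Rightarrow> ((nat \<Rightarrow> real) \<Rightarrow> real) \<Rightarrow> bool" where
  "decr_returns M lam \<longleftrightarrow> (\<forall>a a'. nonneg_vec M a \<longrightarrow> nonneg_vec M a' \<longrightarrow>
      hicks M a \<ge> hicks M a' \<longrightarrow> lam a / lam a' \<le> hicks M a / hicks M a')"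

definition row :: "nat set \<Rightarrow> (nat \<Rightarrow> nat \<Rightarrow> real) \<Rightarrow> nat \<Rightarrow> nat \<Rightarrow> real" where
  "row M a i = (\<lambda>j. if j \<in> M then a i j else 0)"

definition uvec :: "nat set \<Rightarrow> (nat \<Rightarrow> nat \<Rightarrow> real) \<Rightarrow> (nat \<Rightarrow> (nat \<Rightarrow> real) \<Rightarrow> real) \<Rightarrow> nat \<Rightarrow> real" where
  "uvec M a lam i = ln (lam i (row M a i)) + (\<Sum>j\<in>M \<union> {0}. xlogx (a i j))"

(* Welfare W(A,lambda) = a_0^T (I - A)^{-1} u, with A = (a_{ij})_{i,j \<in> M}, M = {1..N};
   JNF matrices are 0-indexed, so firm i corresponds to row/column i-1. *)
definition welfare :: "nat \<Rightarrow> (nat \<Rightarrow> real) \<Rightarrow> (nat \<Rightarrow> nat \<Rightarrow> real) \<Rightarrow> (nat \<Rightarrow> (nat \<Rightarrow> real) \<Rightarrow> real) \<Rightarrow> real" where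
  "welfare N a0 a lam =
     (let Am = mat N N (\<lambda>(i, j). a (i + 1) (j + 1));
          a0v = vec N (\<lambda>i. a0 (i + 1));
          uv = vec N (\<lambda>i. uvec {1..N} a lam (i + 1))
      in a0v \<bullet> (the (mat_inverse (1\<^sub>m N - Am)) *\<^sub>v uv))"

end

theory Submission
  imports Defs "Jordan_Normal_Form.Determinant"
begin


lemma nonneg_sol:
  fixes A :: "nat \<Rightarrow> nat \<Rightarrow> real" and x :: "nat \<Rightarrow> real"
  assumes nn: "\<forall>i<N. \<forall>j<N. 0 \<le> A i j"
    and rs: "\<forall>i<N. (\<Sum>j<N. A i j) < 1"
    and sup: "\<forall>i<N. x i - (\<Sum>j<N. A i j * x j) \<ge> 0"
  shows "\<forall>i<N. x i \<ge> 0"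
proof (rule ccontr)
  assume "\<not> ?thesis"
  then obtain i where i: "i < N" "x i < 0" by auto
  have fin: "finite (x ` {..<N})" "x ` {..<N} \<noteq> {}" using i by auto
  obtain m where m0: "m \<in> {..<N}" "x m = Min (x ` {..<N})"
    using Min_in[OF fin] by auto
  have m: "m \<in> {..<N}" "\<forall>j\<in>{..<N}. x m \<le> x j"
    using m0 Min_le[OF fin(1)] by auto
  have xm: "x m < 0" using m i by force
  have "(\<Sum>j<N. A m j * x j) \<ge> (\<Sum>j<N. A m j * x m)"
    by (rule sum_mono) (use nn m in \<open>auto intro: mult_left_mono\<close>)
  also have "(\<Sum>j<N. A m j * x m) = x m * (\<Sum>j<N. A m j)" by (simp add: sum_distrib_left mult.commute)
  finally have "x m - x m * (\<Sum>j<N. A m j) \<ge> 0" using sup m by force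
  hence "x m * (1 - (\<Sum>j<N. A m j)) \<ge> 0" by (simp add: algebra_simps)
  moreover have "1 - (\<Sum>j<N. A m j) > 0" using rs m by auto
  ultimately have "x m \<ge> 0" by (simp add: zero_le_mult_iff)
  thus False using xm by simp
qed

lemma delta1:
  fixes f :: "nat \<Rightarrow> real"
  assumes "i < N" shows "(\<Sum>j<N. (if i = j then 1 else 0) * f j) = f i"
proof -
  have "(\<Sum>j<N. (if i = j then 1 else 0) * f j) = (\<Sum>j<N. if i = j then f j else 0)"
    by (rule sum.cong) auto
  also have "\<dots> = f i" using assms by (simp add: sum.delta)
  finally show ?thesis .
qed

lemma delta2:
  fixes f :: "nat \<Rightarrow> real"
  assumes "i < N" shows "(\<Sum>j<N. f j * (if j = i then 1 else 0)) = f i"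
proof -
  have "(\<Sum>j<N. f j * (if j = i then 1 else 0)) = (\<Sum>j<N. if i = j then f j else 0)"
    by (rule sum.cong) auto
  also have "\<dots> = f i" using assms by (simp add: sum.delta)
  finally show ?thesis .
qed

lemma core:
  fixes A :: "nat \<Rightarrow> nat \<Rightarrow> real" and a :: "nat \<Rightarrow> real"
  assumes nn: "\<forall>i<N. \<forall>j<N. 0 \<le> A i j"
    and rs: "\<forall>i<N. (\<Sum>j<N. A i j) < 1"
    and ann: "\<forall>i<N. 0 \<le> a i"
  shows "\<exists>\<sigma>. (\<forall>k<N. 0 \<le> \<sigma> k) \<and> (\<forall>j<N. \<sigma> j - (\<Sum>i<N. \<sigma> i * A i j) = a j)
     \<and> (\<forall>s. (\<forall>j<N. s j - (\<Sum>i<N. s i * A i j) = a j) \<longrightarrow> (\<forall>j<N. s j = \<sigma> j))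
     \<and> (\<forall>u. vec N a \<bullet> (the (mat_inverse (1\<^sub>m N - mat N N (\<lambda>(i,j). A i j))) *\<^sub>v vec N u)
            = (\<Sum>k<N. \<sigma> k * u k))"
proof -
  define M where "M = 1\<^sub>m N - mat N N (\<lambda>(i,j). A i j)"
  have Mc: "M \<in> carrier_mat N N" unfolding M_def by auto
  have Mij: "M $$ (i,j) = (if i = j then 1 else 0) - A i j" if "i < N" "j < N" for i j
    using that unfolding M_def by auto
  have Mv: "(M *\<^sub>v v) $ i = v $ i - (\<Sum>j<N. A i j * v $ j)" if "v \<in> carrier_vec N" "i < N" for v i
  proof -
    have "(M *\<^sub>v v) $ i = (\<Sum>j<N. M $$ (i,j) * v $ j)"
      using that Mc by (simp add: scalar_prod_def atLeast0LessThan row_def)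
    also have "\<dots> = (\<Sum>j<N. (if i = j then 1 else 0) * v $ j - A i j * v $ j)"
      by (rule sum.cong) (use that in \<open>auto simp: Mij left_diff_distrib\<close>)
    also have "\<dots> = v $ i - (\<Sum>j<N. A i j * v $ j)"
      using that by (simp add: sum_subtractf delta1)
    finally show ?thesis .
  qed
  have detM: "det M \<noteq> 0"
  proof
    assume "det M = 0"
    then obtain v where v: "v \<in> carrier_vec N" "v \<noteq> 0\<^sub>v N" "M *\<^sub>v v = 0\<^sub>v N"
      using det_0_iff_vec_prod_zero[OF Mc] by auto
    have h: "\<forall>i<N. v $ i - (\<Sum>j<N. A i j * v $ j) = 0"
      using Mv[OF v(1)] v(3) by (metis index_zero_vec(1))
    have p1: "\<forall>i<N. v $ i \<ge> 0"
      by (rule nonneg_sol[OF nn rs]) (use h in auto)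
    have p2: "\<forall>i<N. - v $ i \<ge> 0"
    proof (rule nonneg_sol[OF nn rs], intro allI impI)
      fix i assume "i < N"
      then have "v $ i - (\<Sum>j<N. A i j * v $ j) = 0" using h by auto
      then show "0 \<le> - v $ i - (\<Sum>j<N. A i j * - v $ j)" by (simp add: sum_negf)
    qed
    have "v = 0\<^sub>v N" by (rule eq_vecI) (use p1 p2 v(1) in \<open>auto intro: antisym\<close>)
    with v(2) show False by simp
  qed
  obtain S where S: "mat_inverse M = Some S"
  proof (cases "mat_inverse M")
    case None
    then show ?thesis using mat_inverse(1)[OF Mc None, of undefined] det_non_zero_imp_unit[OF Mc detM, of undefined] by blast
  next
    case (Some S) then show ?thesis using that by simp
  qed
  from mat_inverse(2)[OF Mc S] have MS: "M * S = 1\<^sub>m N" and SM: "S * M = 1\<^sub>m N" and Sc: "S \<in> carrier_mat N N"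
    by auto
  have SMe: "S $$ (i,j) - (\<Sum>k<N. S $$ (i,k) * A k j) = (if i = j then 1 else 0)" if "i < N" "j < N" for i j
  proof -
    have "(S * M) $$ (i,j) = (\<Sum>k<N. S $$ (i,k) * M $$ (k,j))"
      using that Mc Sc by (simp add: scalar_prod_def atLeast0LessThan)
    also have "\<dots> = (\<Sum>k<N. S $$ (i,k) * (if k = j then 1 else 0) - S $$ (i,k) * A k j)"
      by (rule sum.cong) (use that in \<open>auto simp: Mij right_diff_distrib\<close>)
    also have "\<dots> = S $$ (i,j) - (\<Sum>k<N. S $$ (i,k) * A k j)"
      using that by (simp add: sum_subtractf delta2)
    finally show ?thesis using SM that by simp
  qed
  have MSe: "S $$ (i,j) - (\<Sum>k<N. A i k * S $$ (k,j)) = (if i = j then 1 else 0)" if "i < N" "j < N" for i j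
  proof -
    have "(M * S) $$ (i,j) = (\<Sum>k<N. M $$ (i,k) * S $$ (k,j))"
      using that Mc Sc by (simp add: scalar_prod_def atLeast0LessThan)
    also have "\<dots> = (\<Sum>k<N. (if i = k then 1 else 0) * S $$ (k,j) - A i k * S $$ (k,j))"
      by (rule sum.cong) (use that in \<open>auto simp: Mij left_diff_distrib\<close>)
    also have "\<dots> = S $$ (i,j) - (\<Sum>k<N. A i k * S $$ (k,j))"
      using that by (simp add: sum_subtractf delta1)
    finally show ?thesis using MS that by simp
  qed
  define \<sigma> where "\<sigma> k = (\<Sum>i<N. a i * S $$ (i,k))" for k
  have Snn: "\<forall>j<N. S $$ (j,k) \<ge> 0" if "k < N" for k
    by (rule nonneg_sol[OF nn rs, of "\<lambda>j. S $$ (j,k)"]) (use MSe that in auto)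
  have P1: "\<forall>k<N. 0 \<le> \<sigma> k"
    unfolding \<sigma>_def using Snn ann by (auto intro!: sum_nonneg)
  have P2: "\<forall>j<N. \<sigma> j - (\<Sum>i<N. \<sigma> i * A i j) = a j"
  proof (intro allI impI)
    fix j assume j: "j < N"
    have "(\<Sum>k<N. \<sigma> k * A k j) = (\<Sum>k<N. \<Sum>i<N. a i * S $$ (i,k) * A k j)"
      unfolding \<sigma>_def by (simp add: sum_distrib_right)
    also have "\<dots> = (\<Sum>i<N. \<Sum>k<N. a i * S $$ (i,k) * A k j)" by (rule sum.swap)
    also have "\<dots> = (\<Sum>i<N. a i * (\<Sum>k<N. S $$ (i,k) * A k j))" by (simp add: sum_distrib_left mult.assoc)
    finally have "(\<Sum>k<N. \<sigma> k * A k j) = (\<Sum>i<N. a i * (\<Sum>k<N. S $$ (i,k) * A k j))" .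
    hence "\<sigma> j - (\<Sum>k<N. \<sigma> k * A k j) = (\<Sum>i<N. a i * (S $$ (i,j) - (\<Sum>k<N. S $$ (i,k) * A k j)))"
      unfolding \<sigma>_def by (simp add: right_diff_distrib sum_subtractf)
    also have "\<dots> = (\<Sum>i<N. a i * (if i = j then 1 else 0))"
      by (rule sum.cong) (use SMe j in auto)
    also have "\<dots> = a j" using j delta2[of j N a] by simp
    finally show "\<sigma> j - (\<Sum>i<N. \<sigma> i * A i j) = a j" .
  qed
  have P3: "\<forall>j<N. s j = \<sigma> j" if hs: "\<forall>j<N. s j - (\<Sum>i<N. s i * A i j) = a j" for s
  proof (intro allI impI)
    fix j assume j: "j < N"
    have "s j = (\<Sum>i<N. s i * (if i = j then 1 else 0))" using j by (simp add: delta2)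
    also have "\<dots> = (\<Sum>i<N. s i * (S $$ (i,j) - (\<Sum>k<N. A i k * S $$ (k,j))))"
      by (rule sum.cong) (use MSe j in auto)
    also have "\<dots> = (\<Sum>i<N. s i * S $$ (i,j)) - (\<Sum>i<N. \<Sum>k<N. s i * A i k * S $$ (k,j))"
      by (simp add: right_diff_distrib sum_subtractf sum_distrib_left mult.assoc)
    also have "(\<Sum>i<N. \<Sum>k<N. s i * A i k * S $$ (k,j)) = (\<Sum>k<N. \<Sum>i<N. s i * A i k * S $$ (k,j))"
      by (rule sum.swap)
    also have "(\<Sum>i<N. s i * S $$ (i,j)) - (\<Sum>k<N. \<Sum>i<N. s i * A i k * S $$ (k,j))
       = (\<Sum>k<N. (s k - (\<Sum>i<N. s i * A i k)) * S $$ (k,j))"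
      by (simp add: left_diff_distrib sum_subtractf sum_distrib_right)
    also have "\<dots> = (\<Sum>k<N. a k * S $$ (k,j))"
      by (rule sum.cong) (use hs in auto)
    finally show "s j = \<sigma> j" unfolding \<sigma>_def .
  qed
  have P4: "vec N a \<bullet> (the (mat_inverse M) *\<^sub>v vec N u) = (\<Sum>k<N. \<sigma> k * u k)" for u
  proof -
    have "vec N a \<bullet> (the (mat_inverse M) *\<^sub>v vec N u) = (\<Sum>i<N. a i * (\<Sum>k<N. S $$ (i,k) * u k))"
      using S Sc by (simp add: scalar_prod_def atLeast0LessThan)
    also have "\<dots> = (\<Sum>i<N. \<Sum>k<N. a i * S $$ (i,k) * u k)"
      by (simp add: sum_distrib_left mult.assoc)
    also have "\<dots> = (\<Sum>k<N. \<Sum>i<N. a i * S $$ (i,k) * u k)" by (rule sum.swap)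
    also have "\<dots> = (\<Sum>k<N. \<sigma> k * u k)"
      unfolding \<sigma>_def by (simp add: sum_distrib_right)
    finally show ?thesis .
  qed
  show ?thesis using P1 P2 P3 P4 unfolding M_def by blast
qed


lemma blocksum:
  fixes f :: "nat \<Rightarrow> real"
  shows "(\<Sum>k<n*L. f k) = (\<Sum>l<L. \<Sum>c<n. f (l*n+c))"
proof -
  have "(\<Sum>k<n*L. f k) = (\<Sum>l<L. sum f {l*n..<l*n+n})"
    using sum.nat_group[of f n L] by (simp add: mult.commute)
  also have "\<dots> = (\<Sum>l<L. \<Sum>c<n. f (l*n+c))"
  proof (rule sum.cong[OF refl])
    fix l
    have "sum f {l*n..<l*n+n} = sum f {0 + l*n..<n + l*n}" by (simp add: add.commute)
    also have "\<dots> = (\<Sum>c=0..<n. f (c + l*n))" by (rule sum.shift_bounds_nat_ivl)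
    finally show "sum f {l*n..<l*n+n} = (\<Sum>c<n. f (l*n+c))" by (simp add: atLeast0LessThan add.commute)
  qed
  finally show ?thesis .
qed

lemma blk_isl: "c \<in> {1..n} \<Longrightarrow> blk (islands n) c = {c}"
  unfolding blk_def islands_def by (rule the_equality) auto

lemma blk_fc: "c \<in> {1..n} \<Longrightarrow> blk (fully_connected n) c = {1..n}"
  unfolding blk_def fully_connected_def by (rule the_equality) auto

lemma sector_s: "sector n (Suc m) = Suc (m div n)" unfolding sector_def by simp
lemma country_s: "country n (Suc m) = Suc (m mod n)" unfolding country_def by simp


lemma aI_entry:
  assumes "0 < n" "k < n*L" "m < n*L"
  shows "aQ n L b (islands n) (k+1) (m+1) = (if m mod n = k mod n then b (k div n + 1) (m div n + 1) else 0)"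
proof -
  have bl: "blk (islands n) (Suc (k mod n)) = {Suc (k mod n)}"
    by (rule blk_isl) (use assms in \<open>auto simp: Suc_le_eq\<close>)
  have fm: "Suc m \<in> firms n L" using assms unfolding firms_def by auto
  have eq: "m = k" if "m div n = k div n" "m mod n = k mod n"
    by (metis div_mult_mod_eq that)
  show ?thesis
  proof (cases "m div n = k div n")
    case True
    then show ?thesis using fm eq unfolding aQ_def by (simp add: sector_s)
  next
    case False
    then show ?thesis using fm unfolding aQ_def by (simp add: sector_s country_s bl)
  qed
qed

lemma aF_entry:
  assumes "0 < n" "k < n*L" "m < n*L"
  shows "aQ n L b (fully_connected n) (k+1) (m+1) =
     (if m div n = k div n then (if m = k then b (k div n + 1) (k div n + 1) else 0)
      else b (k div n + 1) (m div n + 1) / real n)"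
proof -
  have bl: "blk (fully_connected n) (Suc (k mod n)) = {1..n}"
    by (rule blk_fc) (use assms in \<open>auto simp: Suc_le_eq\<close>)
  have fm: "Suc m \<in> firms n L" using assms unfolding firms_def by auto
  have "m mod n + 1 \<in> {1..n}" using assms by (auto simp: Suc_le_eq)
  then show ?thesis using fm unfolding aQ_def by (simp add: sector_s country_s bl)
qed


lemma dm_div: "c < (n::nat) \<Longrightarrow> (l*n+c) div n = l" by simp
lemma dm_mod: "c < (n::nat) \<Longrightarrow> (l*n+c) mod n = c" by simp
lemma dm_bound: "l < L \<Longrightarrow> c < (n::nat) \<Longrightarrow> l*n+c < n*L"
proof -
  assume "l < L" "c < n"
  have "l*n + c < l*n + n" using \<open>c < n\<close> by simp
  also have "\<dots> = Suc l * n" by simp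
  also have "\<dots> \<le> L * n" using \<open>l < L\<close> by (intro mult_right_mono) auto
  finally show ?thesis by (simp add: mult.commute)
qed
lemma dm_divL: "k < n*L \<Longrightarrow> k div n < (L::nat)"
  by (simp add: less_mult_imp_div_less mult.commute)

definition BQ :: "nat \<Rightarrow> nat \<Rightarrow> (nat \<Rightarrow> nat \<Rightarrow> real) \<Rightarrow> nat set set \<Rightarrow> nat \<Rightarrow> nat \<Rightarrow> real" where
  "BQ n L b Q k m = aQ n L b Q (Suc k) (Suc m)"

lemma eI_blk:
  assumes "0 < n" "l < L" "c < n" "l' < L" "c' < n"
  shows "BQ n L b (islands n) (l*n+c) (l'*n+c') = (if c' = c then b (Suc l) (Suc l') else 0)"
  using aI_entry[of n "l*n+c" L "l'*n+c'" b] assms dm_bound[of l L c n] dm_bound[of l' L c' n]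
  unfolding BQ_def by (simp add: dm_div dm_mod)

lemma eF_blk:
  assumes "0 < n" "l < L" "c < n" "l' < L" "c' < n"
  shows "BQ n L b (fully_connected n) (l*n+c) (l'*n+c') =
     (if l' = l then (if c' = c then b (Suc l) (Suc l) else 0) else b (Suc l) (Suc l') / real n)"
proof -
  have "(l'*n+c' = l*n+c) = (l' = l \<and> c' = c)"
    by (metis assms(3,5) dm_div dm_mod)
  then show ?thesis
    using aF_entry[of n "l*n+c" L "l'*n+c'" b] assms dm_bound[of l L c n] dm_bound[of l' L c' n]
    unfolding BQ_def by (simp add: dm_div dm_mod)
qed

definition good :: "nat \<Rightarrow> nat \<Rightarrow> (nat \<Rightarrow> nat \<Rightarrow> real) \<Rightarrow> (nat \<Rightarrow> nat \<Rightarrow> real) \<Rightarrow> bool" where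
  "good n L b B \<longleftrightarrow> (\<forall>k<n*L. \<forall>m<n*L. 0 \<le> B k m)
     \<and> (\<forall>l<L. \<forall>c<n. \<forall>l'<L. (\<Sum>c'<n. B (l*n+c) (l'*n+c')) = b (Suc l) (Suc l'))
     \<and> (\<forall>l<L. \<forall>l'<L. \<forall>c'<n. (\<Sum>c<n. B (l*n+c) (l'*n+c')) = b (Suc l) (Suc l'))"

lemma sum_delta_c: "c < (n::nat) \<Longrightarrow> (\<Sum>c'<n. if c' = c then (x::real) else 0) = x"
  using sum.delta'[of "{..<n}" c "\<lambda>_. x"] by simp

lemma good_I:
  assumes n: "0 < n" and bnn: "\<forall>l<L. \<forall>l'\<le>L. 0 \<le> b (Suc l) l'"
  shows "good n L b (BQ n L b (islands n))"
  unfolding good_def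
proof (intro conjI allI impI)
  fix k m assume km: "k < n*L" "m < n*L"
  show "0 \<le> BQ n L b (islands n) k m"
    using aI_entry[OF n km, of b] bnn dm_divL[OF km(1)] dm_divL[OF km(2)] unfolding BQ_def
    by (simp add: Suc_le_eq)
next
  fix l c l' assume h: "l < L" "c < n" "l' < L"
  show "(\<Sum>c'<n. BQ n L b (islands n) (l*n+c) (l'*n+c')) = b (Suc l) (Suc l')"
    using h by (simp add: eI_blk[OF n] sum_delta_c)
next
  fix l l' c' assume h: "l < L" "l' < L" "c' < n"
  have "(\<Sum>c<n. BQ n L b (islands n) (l*n+c) (l'*n+c')) = (\<Sum>c<n. if c = c' then b (Suc l) (Suc l') else 0)"
    by (rule sum.cong) (use h in \<open>auto simp: eI_blk[OF n]\<close>)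
  then show "(\<Sum>c<n. BQ n L b (islands n) (l*n+c) (l'*n+c')) = b (Suc l) (Suc l')"
    using h by (simp add: sum_delta_c)
qed

lemma good_F:
  assumes n: "0 < n" and bnn: "\<forall>l<L. \<forall>l'\<le>L. 0 \<le> b (Suc l) l'"
  shows "good n L b (BQ n L b (fully_connected n))"
  unfolding good_def
proof (intro conjI allI impI)
  fix k m assume km: "k < n*L" "m < n*L"
  show "0 \<le> BQ n L b (fully_connected n) k m"
    using aF_entry[OF n km, of b] bnn dm_divL[OF km(1)] dm_divL[OF km(2)] unfolding BQ_def
    by (simp add: Suc_le_eq)
next
  fix l c l' assume h: "l < L" "c < n" "l' < L"
  show "(\<Sum>c'<n. BQ n L b (fully_connected n) (l*n+c) (l'*n+c')) = b (Suc l) (Suc l')"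
  proof (cases "l' = l")
    case True then show ?thesis using h by (simp add: eF_blk[OF n] sum_delta_c)
  next
    case False then show ?thesis using h n by (simp add: eF_blk[OF n])
  qed
next
  fix l l' c' assume h: "l < L" "l' < L" "c' < n"
  show "(\<Sum>c<n. BQ n L b (fully_connected n) (l*n+c) (l'*n+c')) = b (Suc l) (Suc l')"
  proof (cases "l' = l")
    case True
    have "(\<Sum>c<n. BQ n L b (fully_connected n) (l*n+c) (l'*n+c')) = (\<Sum>c<n. if c = c' then b (Suc l) (Suc l') else 0)"
      by (rule sum.cong) (use h True in \<open>auto simp: eF_blk[OF n]\<close>)
    then show ?thesis using h by (simp add: sum_delta_c)
  next
    case False then show ?thesis using h n by (simp add: eF_blk[OF n])
  qed
qed


lemma kdecomp: "(k div n) * n + k mod (n::nat) = k" by (rule div_mult_mod_eq)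

lemma good_rows:
  assumes n: "0 < n" and g: "good n L b B" and k: "k < n*L"
  shows "(\<Sum>m<n*L. B k m) = (\<Sum>l'<L. b (Suc (k div n)) (Suc l'))"
proof -
  have R: "\<forall>l<L. \<forall>c<n. \<forall>l'<L. (\<Sum>c'<n. B (l*n+c) (l'*n+c')) = b (Suc l) (Suc l')"
    using g unfolding good_def by blast
  have "(\<Sum>m<n*L. B k m) = (\<Sum>l'<L. \<Sum>c'<n. B k (l'*n+c'))"
    by (simp add: blocksum)
  also have "\<dots> = (\<Sum>l'<L. b (Suc (k div n)) (Suc l'))"
  proof (rule sum.cong[OF refl])
    fix x assume "x \<in> {..<L}"
    then have "(\<Sum>c'<n. B ((k div n) * n + k mod n) (x*n+c')) = b (Suc (k div n)) (Suc x)"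
      using R[rule_format, OF dm_divL[OF k], of "k mod n" x] n by simp
    then show "(\<Sum>c'<n. B k (x*n+c')) = b (Suc (k div n)) (Suc x)" by (simp only: kdecomp)
  qed
  finally show ?thesis .
qed

lemma good_cols:
  assumes n: "0 < n" and g: "good n L b B" and j: "j < n*L"
  shows "(\<Sum>i<n*L. t (i div n) * B i j) = (\<Sum>l<L. t l * b (Suc l) (Suc (j div n)))"
proof -
  have C: "\<forall>l<L. \<forall>l'<L. \<forall>c'<n. (\<Sum>c<n. B (l*n+c) (l'*n+c')) = b (Suc l) (Suc l')"
    using g unfolding good_def by blast
  have "(\<Sum>i<n*L. t (i div n) * B i j) = (\<Sum>l<L. \<Sum>c<n. t ((l*n+c) div n) * B (l*n+c) j)"
    by (simp add: blocksum)
  also have "\<dots> = (\<Sum>l<L. t l * (\<Sum>c<n. B (l*n+c) j))"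
    by (rule sum.cong[OF refl]) (simp add: sum_distrib_left dm_div)
  also have "\<dots> = (\<Sum>l<L. t l * b (Suc l) (Suc (j div n)))"
  proof (rule sum.cong[OF refl])
    fix x assume "x \<in> {..<L}"
    then have "(\<Sum>c<n. B (x*n+c) ((j div n) * n + j mod n)) = b (Suc x) (Suc (j div n))"
      using C[rule_format, of x "j div n" "j mod n"] dm_divL[OF j] n by simp
    then show "t x * (\<Sum>c<n. B (x*n+c) j) = t x * b (Suc x) (Suc (j div n))" by (simp only: kdecomp)
  qed
  finally show ?thesis .
qed

lemma good_rowblk:
  assumes n: "0 < n" and g: "good n L b B" and l': "l' < L"
  shows "(\<Sum>c'<n. \<Sum>i<n*L. s i * B i (l'*n+c')) = (\<Sum>i<n*L. s i * b (Suc (i div n)) (Suc l'))"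
proof -
  have "(\<Sum>c'<n. \<Sum>i<n*L. s i * B i (l'*n+c')) = (\<Sum>i<n*L. \<Sum>c'<n. s i * B i (l'*n+c'))"
    by (rule sum.swap)
  also have "\<dots> = (\<Sum>i<n*L. s i * (\<Sum>c'<n. B i (l'*n+c')))"
    by (simp add: sum_distrib_left)
  also have "\<dots> = (\<Sum>i<n*L. s i * b (Suc (i div n)) (Suc l'))"
  proof (rule sum.cong[OF refl])
    have R: "\<forall>l<L. \<forall>c<n. \<forall>l'<L. (\<Sum>c'<n. B (l*n+c) (l'*n+c')) = b (Suc l) (Suc l')"
      using g unfolding good_def by blast
    fix x assume "x \<in> {..<n*L}"
    then have "(\<Sum>c'<n. B ((x div n) * n + x mod n) (l'*n+c')) = b (Suc (x div n)) (Suc l')"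
      using R[rule_format, of "x div n" "x mod n" l'] dm_divL l' n by simp
    then show "s x * (\<Sum>c'<n. B x (l'*n+c')) = s x * b (Suc (x div n)) (Suc l')" by (simp only: kdecomp)
  qed
  finally show ?thesis .
qed

lemma good_rowsum_lt:
  assumes n: "0 < n" and g: "good n L b B" and k: "k < n*L"
    and bl: "\<forall>l\<in>{1..L}. 0 < b l 0"
    and bs: "\<forall>l\<in>{1..L}. (\<Sum>l'=0..L. b l l') \<le> 1"
  shows "(\<Sum>m<n*L. B k m) < 1"
proof -
  let ?l = "Suc (k div n)"
  have lL: "?l \<in> {1..L}" using dm_divL[OF k] by auto
  have "(\<Sum>l'=0..L. b ?l l') = b ?l 0 + (\<Sum>l'=Suc 0..L. b ?l l')"
    by (rule sum.atLeast_Suc_atMost) simp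
  also have "(\<Sum>l'=Suc 0..L. b ?l l') = (\<Sum>l'<L. b ?l (Suc l'))"
    by (rule sum.atLeast1_atMost_eq)
  finally have "(\<Sum>l'<L. b ?l (Suc l')) < 1" using bl bs lL by force
  then show ?thesis using good_rows[OF n g k] by simp
qed

lemma avg:
  assumes n: "0 < n" and g: "good n L b B"
    and hs: "\<forall>j<n*L. s j - (\<Sum>i<n*L. s i * B i j) = a0 (Suc (j div n)) / real n"
  defines "t \<equiv> (\<lambda>l. (\<Sum>c<n. s (l*n+c)) / real n)"
  shows "\<forall>j<n*L. t (j div n) - (\<Sum>i<n*L. t (i div n) * B i j) = a0 (Suc (j div n)) / real n"
proof (intro allI impI)
  fix j assume j: "j < n*L"
  let ?l = "j div n"
  have lL: "?l < L" using dm_divL[OF j] .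
  have "(\<Sum>c'<n. s (?l*n+c')) = (\<Sum>c'<n. a0 (Suc ?l) / real n + (\<Sum>i<n*L. s i * B i (?l*n+c')))"
  proof (rule sum.cong[OF refl])
    fix c' assume "c' \<in> {..<n}"
    then have c': "c' < n" by simp
    have "s (?l*n+c') - (\<Sum>i<n*L. s i * B i (?l*n+c')) = a0 (Suc ((?l*n+c') div n)) / real n"
      using hs dm_bound[OF lL c'] by blast
    then show "s (?l*n+c') = a0 (Suc ?l) / real n + (\<Sum>i<n*L. s i * B i (?l*n+c'))"
      using c' by (simp add: dm_div)
  qed
  also have "\<dots> = a0 (Suc ?l) + (\<Sum>c'<n. \<Sum>i<n*L. s i * B i (?l*n+c'))"
    using n by (simp add: sum.distrib)
  also have "(\<Sum>c'<n. \<Sum>i<n*L. s i * B i (?l*n+c')) = (\<Sum>i<n*L. s i * b (Suc (i div n)) (Suc ?l))"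
    by (rule good_rowblk[OF n g lL])
  also have "\<dots> = (\<Sum>l<L. \<Sum>c<n. s (l*n+c) * b (Suc l) (Suc ?l))"
    by (simp add: blocksum dm_div)
  also have "\<dots> = (\<Sum>l<L. real n * (t l * b (Suc l) (Suc ?l)))"
    unfolding t_def using n by (simp add: sum_distrib_right)
  finally have e1: "(\<Sum>c'<n. s (?l*n+c')) = a0 (Suc ?l) + real n * (\<Sum>l<L. t l * b (Suc l) (Suc ?l))"
    by (simp add: sum_distrib_left)
  have "t ?l = a0 (Suc ?l) / real n + (\<Sum>l<L. t l * b (Suc l) (Suc ?l))"
    unfolding t_def e1[folded t_def] using n by (simp add: field_simps t_def)
  then show "t (j div n) - (\<Sum>i<n*L. t (i div n) * B i j) = a0 (Suc (j div n)) / real n"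
    using good_cols[OF n g j, of t] by simp
qed


lemma firms_sum: "(\<Sum>j\<in>firms n L. f j) = (\<Sum>m<n*L. (f (Suc m) :: real))"
  using sum.atLeast1_atMost_eq[of f "n*L"] by (simp add: firms_def)

lemma firms_prod: "(\<Prod>j\<in>firms n L. f j) = (\<Prod>m<n*L. (f (Suc m) :: real))"
  using prod.atLeast1_atMost_eq[of f "n*L"] by (simp add: firms_def)

lemma xpowx_exp: "0 \<le> x \<Longrightarrow> xpowx x = exp (xlogx x)"
  unfolding xpowx_def xlogx_def by (simp add: powr_def)

lemma uvec_split:
  "uvec (firms n L) a lam (Suc k) = ln (lam (Suc k) (row (firms n L) a (Suc k))) + xlogx (a (Suc k) 0)
     + (\<Sum>m<n*L. xlogx (a (Suc k) (Suc m)))"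
proof -
  have "firms n L \<union> {0} = insert 0 (firms n L)" by auto
  moreover have "0 \<notin> firms n L" "finite (firms n L)" unfolding firms_def by auto
  ultimately show ?thesis unfolding uvec_def by (simp add: firms_sum)
qed

lemma hicks_row:
  assumes "\<forall>m<n*L. 0 \<le> a (Suc k) (Suc m)"
  shows "hicks (firms n L) (row (firms n L) a (Suc k)) = exp (- (\<Sum>m<n*L. xlogx (a (Suc k) (Suc m))))"
proof -
  have r: "row (firms n L) a (Suc k) (Suc m) = a (Suc k) (Suc m)" if "m < n*L" for m
    using that unfolding row_def firms_def by auto
  have "(\<Prod>j\<in>firms n L. xpowx (row (firms n L) a (Suc k) j)) = (\<Prod>m<n*L. exp (xlogx (a (Suc k) (Suc m))))"
    unfolding firms_prod by (rule prod.cong[OF refl]) (use assms r in \<open>auto simp: xpowx_exp\<close>)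
  also have "\<dots> = exp (\<Sum>m<n*L. xlogx (a (Suc k) (Suc m)))" by (simp add: exp_sum)
  finally show ?thesis unfolding hicks_def by (simp add: exp_minus field_simps)
qed

lemma nonneg_row:
  assumes "\<forall>m<n*L. 0 \<le> a (Suc k) (Suc m)"
  shows "nonneg_vec (firms n L) (row (firms n L) a (Suc k))"
  unfolding nonneg_vec_def row_def
proof (intro conjI ballI allI impI)
  fix j assume "j \<in> firms n L"
  then obtain m where "j = Suc m" "m < n*L" unfolding firms_def by (cases j) auto
  then show "0 \<le> (if j \<in> firms n L then a (Suc k) j else 0)" using assms by auto
qed auto

lemma xlogx_split:
  assumes "0 \<le> \<beta>" "0 < n"
  shows "real n * xlogx (\<beta> / real n) \<le> xlogx \<beta>"
proof (cases "\<beta> = 0")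
  case True then show ?thesis by (simp add: xlogx_def)
next
  case False
  then have bp: "\<beta> > 0" using assms by auto
  have "real n * xlogx (\<beta> / real n) = \<beta> * (ln \<beta> - ln (real n))"
    using bp assms by (simp add: xlogx_def ln_div)
  also have "\<dots> \<le> \<beta> * ln \<beta>" using bp assms by (simp add: mult_left_mono)
  finally show ?thesis using bp by (simp add: xlogx_def)
qed

lemma xlogx_if: "xlogx (if P then x else 0) = (if P then xlogx x else 0)"
  by (simp add: xlogx_def)

lemma entropy_cmp0:
  assumes n: "0 < n" and lL: "l < L" and cn: "c < n" and bnn: "\<forall>l<L. \<forall>l'\<le>L. 0 \<le> b (Suc l) l'"
  shows "(\<Sum>m<n*L. xlogx (BQ n L b (fully_connected n) (l*n+c) m)) \<le> (\<Sum>m<n*L. xlogx (BQ n L b (islands n) (l*n+c) m))"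
proof -
  have "(\<Sum>c'<n. xlogx (BQ n L b (fully_connected n) (l*n+c) (x*n+c')))
       \<le> (\<Sum>c'<n. xlogx (BQ n L b (islands n) (l*n+c) (x*n+c')))" if x: "x < L" for x
  proof -
    have I: "(\<Sum>c'<n. xlogx (BQ n L b (islands n) (l*n+c) (x*n+c'))) = xlogx (b (Suc l) (Suc x))"
    proof -
      have "(\<Sum>c'<n. xlogx (BQ n L b (islands n) (l*n+c) (x*n+c')))
          = (\<Sum>c'<n. if c' = c then xlogx (b (Suc l) (Suc x)) else 0)"
        by (rule sum.cong[OF refl]) (use n lL cn x in \<open>simp add: eI_blk xlogx_if\<close>)
      then show ?thesis using sum_delta_c[OF cn] by simp
    qed
    show ?thesis
    proof (cases "x = l")
      case True
      have "(\<Sum>c'<n. xlogx (BQ n L b (fully_connected n) (l*n+c) (x*n+c')))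
          = (\<Sum>c'<n. if c' = c then xlogx (b (Suc l) (Suc x)) else 0)"
        by (rule sum.cong[OF refl]) (use n lL cn x True in \<open>simp add: eF_blk xlogx_if\<close>)
      then show ?thesis using sum_delta_c[OF cn] I by simp
    next
      case False
      have "(\<Sum>c'<n. xlogx (BQ n L b (fully_connected n) (l*n+c) (x*n+c')))
          = (\<Sum>c'<n. xlogx (b (Suc l) (Suc x) / real n))"
        by (rule sum.cong[OF refl]) (use n lL cn x False in \<open>simp add: eF_blk\<close>)
      also have "\<dots> = real n * xlogx (b (Suc l) (Suc x) / real n)" by simp
      also have "\<dots> \<le> xlogx (b (Suc l) (Suc x))"
        by (rule xlogx_split) (use bnn lL x n in auto)
      finally show ?thesis using I by simp
    qed
  qed
  then have "(\<Sum>x<L. \<Sum>c'<n. xlogx (BQ n L b (fully_connected n) (l*n+c) (x*n+c')))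
       \<le> (\<Sum>x<L. \<Sum>c'<n. xlogx (BQ n L b (islands n) (l*n+c) (x*n+c')))"
    by (rule sum_mono) auto
  then show ?thesis by (simp only: blocksum)
qed

lemma entropy_cmp:
  assumes n: "0 < n" and k: "k < n*L" and bnn: "\<forall>l<L. \<forall>l'\<le>L. 0 \<le> b (Suc l) l'"
  shows "(\<Sum>m<n*L. xlogx (BQ n L b (fully_connected n) k m)) \<le> (\<Sum>m<n*L. xlogx (BQ n L b (islands n) k m))"
  using entropy_cmp0[OF n dm_divL[OF k] _ bnn, of "k mod n"] n by (simp only: kdecomp mod_less_divisor)


lemma u_cmp:
  assumes n: "0 < n" and k: "k < n*L" and bnn: "\<forall>l<L. \<forall>l'\<le>L. 0 \<le> b (Suc l) l'"
    and lam_pos: "\<forall>i\<in>firms n L. \<forall>x. nonneg_vec (firms n L) x \<longrightarrow> 0 < lam i x"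
  shows "incr_returns (firms n L) (lam (Suc k)) \<Longrightarrow>
      uvec (firms n L) (aQ n L b (islands n)) lam (Suc k) \<le> uvec (firms n L) (aQ n L b (fully_connected n)) lam (Suc k)"
    and "decr_returns (firms n L) (lam (Suc k)) \<Longrightarrow>
      uvec (firms n L) (aQ n L b (fully_connected n)) lam (Suc k) \<le> uvec (firms n L) (aQ n L b (islands n)) lam (Suc k)"
proof -
  define aI where "aI = aQ n L b (islands n)"
  define aF where "aF = aQ n L b (fully_connected n)"
  define HI where "HI = (\<Sum>m<n*L. xlogx (aI (Suc k) (Suc m)))"
  define HF where "HF = (\<Sum>m<n*L. xlogx (aF (Suc k) (Suc m)))"
  define rI where "rI = row (firms n L) aI (Suc k)"
  define rF where "rF = row (firms n L) aF (Suc k)"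
  have nnI: "\<forall>m<n*L. 0 \<le> aI (Suc k) (Suc m)"
    using good_I[OF n bnn] k unfolding good_def BQ_def aI_def by blast
  have nnF: "\<forall>m<n*L. 0 \<le> aF (Suc k) (Suc m)"
    using good_F[OF n bnn] k unfolding good_def BQ_def aF_def by blast
  have hI: "hicks (firms n L) rI = exp (- HI)" unfolding rI_def HI_def by (rule hicks_row[where n=n and L=L and a=aI and k=k, OF nnI])
  have hF: "hicks (firms n L) rF = exp (- HF)" unfolding rF_def HF_def by (rule hicks_row[where n=n and L=L and a=aF and k=k, OF nnF])
  have HFI: "HF \<le> HI" using entropy_cmp[OF n k bnn] unfolding HF_def HI_def aF_def aI_def BQ_def by simp
  have hge: "hicks (firms n L) rF \<ge> hicks (firms n L) rI" unfolding hI hF using HFI by simp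
  have vI: "nonneg_vec (firms n L) rI" unfolding rI_def by (rule nonneg_row[where n=n and L=L and a=aI and k=k, OF nnI])
  have vF: "nonneg_vec (firms n L) rF" unfolding rF_def by (rule nonneg_row[where n=n and L=L and a=aF and k=k, OF nnF])
  have kf: "Suc k \<in> firms n L" using k unfolding firms_def by auto
  have pI: "0 < lam (Suc k) rI" using lam_pos kf vI by blast
  have pF: "0 < lam (Suc k) rF" using lam_pos kf vF by blast
  have z: "xlogx (aI (Suc k) 0) = xlogx (aF (Suc k) 0)" unfolding aI_def aF_def aQ_def by simp
  have uI: "uvec (firms n L) aI lam (Suc k) = ln (lam (Suc k) rI) + xlogx (aI (Suc k) 0) + HI"
    unfolding rI_def HI_def by (rule uvec_split)
  have uF: "uvec (firms n L) aF lam (Suc k) = ln (lam (Suc k) rF) + xlogx (aF (Suc k) 0) + HF"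
    unfolding rF_def HF_def by (rule uvec_split)
  have ratio: "hicks (firms n L) rF / hicks (firms n L) rI = exp (HI - HF)"
    unfolding hI hF by (simp add: exp_diff[symmetric] exp_minus field_simps)
  have lnq: "ln (lam (Suc k) rF / lam (Suc k) rI) = ln (lam (Suc k) rF) - ln (lam (Suc k) rI)"
    using pI pF by (simp add: ln_div)
  {
    assume "incr_returns (firms n L) (lam (Suc k))"
    then have "lam (Suc k) rF / lam (Suc k) rI \<ge> exp (HI - HF)"
      unfolding incr_returns_def using vI vF hge ratio by metis
    then have "ln (lam (Suc k) rF / lam (Suc k) rI) \<ge> HI - HF"
      using pI pF by (metis divide_pos_pos exp_gt_zero ln_exp ln_le_cancel_iff)
    then show "uvec (firms n L) (aQ n L b (islands n)) lam (Suc k) \<le> uvec (firms n L) (aQ n L b (fully_connected n)) lam (Suc k)"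
      using uI uF z lnq unfolding aI_def aF_def by linarith
  }
  {
    assume "decr_returns (firms n L) (lam (Suc k))"
    then have "lam (Suc k) rF / lam (Suc k) rI \<le> exp (HI - HF)"
      unfolding decr_returns_def using vI vF hge ratio by metis
    then have "ln (lam (Suc k) rF / lam (Suc k) rI) \<le> HI - HF"
      using pI pF by (metis divide_pos_pos exp_gt_zero ln_exp ln_le_cancel_iff)
    then show "uvec (firms n L) (aQ n L b (fully_connected n)) lam (Suc k) \<le> uvec (firms n L) (aQ n L b (islands n)) lam (Suc k)"
      using uI uF z lnq unfolding aI_def aF_def by linarith
  }
qed

theorem mainTheorem13:
  fixes n L :: nat
    and a0 :: "nat \<Rightarrow> real"
    and b :: "nat \<Rightarrow> nat \<Rightarrow> real"
    and lam :: "nat \<Rightarrow> (nat \<Rightarrow> real) \<Rightarrow> real"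
  assumes a0_pos: "\<forall>l\<in>{1..L}. 0 < a0 l"
    and a0_sum: "(\<Sum>l=1..L. a0 l) = 1"
    and b_nonneg: "\<forall>l\<in>{1..L}. \<forall>l'\<in>{0..L}. 0 \<le> b l l'"
    and b_lab: "\<forall>l\<in>{1..L}. 0 < b l 0"
    and b_sum: "\<forall>l\<in>{1..L}. (\<Sum>l'=0..L. b l l') \<le> 1"
    and lam_pos: "\<forall>i\<in>firms n L. \<forall>x. nonneg_vec (firms n L) x \<longrightarrow> 0 < lam i x"
  shows "((\<forall>i\<in>firms n L. incr_returns (firms n L) (lam i)) \<longrightarrow>
            welfare (n * L) (hh n a0) (aQ n L b (fully_connected n)) lam
              \<ge> welfare (n * L) (hh n a0) (aQ n L b (islands n)) lam)
       \<and> ((\<forall>i\<in>firms n L. decr_returns (firms n L) (lam i)) \<longrightarrow>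
            welfare (n * L) (hh n a0) (aQ n L b (islands n)) lam
              \<ge> welfare (n * L) (hh n a0) (aQ n L b (fully_connected n)) lam)"
proof -
  have cases: "n * L = 0 \<or> (0 < n \<and> 0 < L)" by auto
  show ?thesis
  proof (cases "n * L = 0")
    case True
    have w0: "welfare (n*L) (hh n a0) a lam = 0" for a
      unfolding welfare_def Let_def using True by (simp add: scalar_prod_def)
    show ?thesis by (simp add: w0)
  next
    case False
    then have n: "0 < n" and L: "0 < L" by auto
    define N where "N = n * L"
    have bnn: "\<forall>l<L. \<forall>l'\<le>L. 0 \<le> b (Suc l) l'"
      using b_nonneg by auto
    have gI: "good n L b (BQ n L b (islands n))" by (rule good_I[OF n bnn])
    have gF: "good n L b (BQ n L b (fully_connected n))" by (rule good_F[OF n bnn])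
    have hh_eq: "hh n a0 (Suc i) = a0 (Suc (i div n)) / real n" for i
      unfolding hh_def by (simp add: sector_s)
    have ann: "\<forall>i<N. 0 \<le> hh n a0 (Suc i)"
    proof (intro allI impI)
      fix i assume "i < N"
      then have "Suc (i div n) \<in> {1..L}" using dm_divL[of i n L] unfolding N_def by auto
      then show "0 \<le> hh n a0 (Suc i)" using a0_pos by (simp add: hh_eq less_imp_le)
    qed
    have nnI: "\<forall>i<N. \<forall>j<N. 0 \<le> BQ n L b (islands n) i j" using gI unfolding good_def N_def by blast
    have nnF: "\<forall>i<N. \<forall>j<N. 0 \<le> BQ n L b (fully_connected n) i j" using gF unfolding good_def N_def by blast
    have rsI: "\<forall>i<N. (\<Sum>j<N. BQ n L b (islands n) i j) < 1"
      using good_rowsum_lt[OF n gI _ b_lab b_sum] unfolding N_def by blast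
    have rsF: "\<forall>i<N. (\<Sum>j<N. BQ n L b (fully_connected n) i j) < 1"
      using good_rowsum_lt[OF n gF _ b_lab b_sum] unfolding N_def by blast
    obtain sI where sI1: "\<forall>k<N. 0 \<le> sI k"
      and sI2: "\<forall>j<N. sI j - (\<Sum>i<N. sI i * BQ n L b (islands n) i j) = hh n a0 (Suc j)"
      and sI3: "\<forall>s. (\<forall>j<N. s j - (\<Sum>i<N. s i * BQ n L b (islands n) i j) = hh n a0 (Suc j)) \<longrightarrow> (\<forall>j<N. s j = sI j)"
      and sI4: "\<forall>u. vec N (\<lambda>i. hh n a0 (Suc i)) \<bullet> (the (mat_inverse (1\<^sub>m N - mat N N (\<lambda>(i,j). BQ n L b (islands n) i j))) *\<^sub>v vec N u)
            = (\<Sum>k<N. sI k * u k)"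
      using core[where a="\<lambda>i. hh n a0 (Suc i)", OF nnI rsI ann] by blast
    obtain sF where
      sF2: "\<forall>j<N. sF j - (\<Sum>i<N. sF i * BQ n L b (fully_connected n) i j) = hh n a0 (Suc j)"
      and sF3: "\<forall>s. (\<forall>j<N. s j - (\<Sum>i<N. s i * BQ n L b (fully_connected n) i j) = hh n a0 (Suc j)) \<longrightarrow> (\<forall>j<N. s j = sF j)"
      and sF4: "\<forall>u. vec N (\<lambda>i. hh n a0 (Suc i)) \<bullet> (the (mat_inverse (1\<^sub>m N - mat N N (\<lambda>(i,j). BQ n L b (fully_connected n) i j))) *\<^sub>v vec N u)
            = (\<Sum>k<N. sF k * u k)"
      using core[where a="\<lambda>i. hh n a0 (Suc i)", OF nnF rsF ann] by blast
    define t where "t = (\<lambda>l. (\<Sum>c<n. sI (l*n+c)) / real n)"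
    have av: "\<forall>j<n*L. t (j div n) - (\<Sum>i<n*L. t (i div n) * BQ n L b (islands n) i j) = a0 (Suc (j div n)) / real n"
      unfolding t_def by (rule avg[OF n gI]) (use sI2 in \<open>simp add: hh_eq N_def\<close>)
    have tau: "\<forall>j<N. t (j div n) = sI j"
      using sI3[rule_format, of "\<lambda>j. t (j div n)"] av by (simp add: hh_eq N_def)
    have sIF: "\<forall>j<N. sI j - (\<Sum>i<N. sI i * BQ n L b (fully_connected n) i j) = hh n a0 (Suc j)"
    proof (intro allI impI)
      fix j assume j: "j < N"
      have "(\<Sum>i<N. sI i * BQ n L b (fully_connected n) i j) = (\<Sum>i<N. t (i div n) * BQ n L b (fully_connected n) i j)"
        by (rule sum.cong[OF refl]) (use tau in auto)
      also have "\<dots> = (\<Sum>l<L. t l * b (Suc l) (Suc (j div n)))"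
        using good_cols[OF n gF, of j t] j unfolding N_def by simp
      also have "\<dots> = (\<Sum>i<N. t (i div n) * BQ n L b (islands n) i j)"
        using good_cols[OF n gI, of j t] j unfolding N_def by simp
      finally show "sI j - (\<Sum>i<N. sI i * BQ n L b (fully_connected n) i j) = hh n a0 (Suc j)"
        using av tau j unfolding N_def by (simp add: hh_eq)
    qed
    have sIsF: "\<forall>j<N. sI j = sF j" using sF3 sIF by blast
    have wI: "welfare (n * L) (hh n a0) (aQ n L b (islands n)) lam
        = (\<Sum>k<N. sI k * uvec (firms n L) (aQ n L b (islands n)) lam (Suc k))"
    proof -
      have "welfare (n * L) (hh n a0) (aQ n L b (islands n)) lam =
        vec N (\<lambda>i. hh n a0 (Suc i)) \<bullet> (the (mat_inverse (1\<^sub>m N - mat N N (\<lambda>(i,j). BQ n L b (islands n) i j)))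
          *\<^sub>v vec N (\<lambda>i. uvec (firms n L) (aQ n L b (islands n)) lam (Suc i)))"
        unfolding welfare_def Let_def BQ_def firms_def N_def by simp
      then show ?thesis using sI4 by simp
    qed
    have wF: "welfare (n * L) (hh n a0) (aQ n L b (fully_connected n)) lam
        = (\<Sum>k<N. sI k * uvec (firms n L) (aQ n L b (fully_connected n)) lam (Suc k))"
    proof -
      have "welfare (n * L) (hh n a0) (aQ n L b (fully_connected n)) lam =
        vec N (\<lambda>i. hh n a0 (Suc i)) \<bullet> (the (mat_inverse (1\<^sub>m N - mat N N (\<lambda>(i,j). BQ n L b (fully_connected n) i j)))
          *\<^sub>v vec N (\<lambda>i. uvec (firms n L) (aQ n L b (fully_connected n)) lam (Suc i)))"
        unfolding welfare_def Let_def BQ_def firms_def N_def by simp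
      also have "\<dots> = (\<Sum>k<N. sF k * uvec (firms n L) (aQ n L b (fully_connected n)) lam (Suc k))"
        using sF4 by simp
      also have "\<dots> = (\<Sum>k<N. sI k * uvec (firms n L) (aQ n L b (fully_connected n)) lam (Suc k))"
        by (rule sum.cong[OF refl]) (use sIsF in auto)
      finally show ?thesis .
    qed
    have kf: "Suc k \<in> firms n L" if "k < N" for k using that unfolding firms_def N_def by auto
    show ?thesis
    proof (intro conjI impI)
      assume inc: "\<forall>i\<in>firms n L. incr_returns (firms n L) (lam i)"
      show "welfare (n * L) (hh n a0) (aQ n L b (fully_connected n)) lam
              \<ge> welfare (n * L) (hh n a0) (aQ n L b (islands n)) lam"
        unfolding wI wF
      proof (rule sum_mono, rule mult_left_mono)
        fix k assume "k \<in> {..<N}"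
        then have k: "k < N" by simp
        show "uvec (firms n L) (aQ n L b (islands n)) lam (Suc k) \<le> uvec (firms n L) (aQ n L b (fully_connected n)) lam (Suc k)"
          by (rule u_cmp(1)[OF n _ bnn lam_pos]) (use k inc kf N_def in auto)
        show "0 \<le> sI k" using sI1 k by auto
      qed
    next
      assume dec: "\<forall>i\<in>firms n L. decr_returns (firms n L) (lam i)"
      show "welfare (n * L) (hh n a0) (aQ n L b (islands n)) lam
              \<ge> welfare (n * L) (hh n a0) (aQ n L b (fully_connected n)) lam"
        unfolding wI wF
      proof (rule sum_mono, rule mult_left_mono)
        fix k assume "k \<in> {..<N}"
        then have k: "k < N" by simp
        show "uvec (firms n L) (aQ n L b (fully_connected n)) lam (Suc k) \<le> uvec (firms n L) (aQ n L b (islands n)) lam (Suc k)"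
          by (rule u_cmp(2)[OF n _ bnn lam_pos]) (use k dec kf N_def in auto)
        show "0 \<le> sI k" using sI1 k by auto
      qed
    qed
  qed
qed


end
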